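(* Let $h>0$, $n\in\mathbb{N}$, and let $\lambda:\mathbb{T}\to\mathbb{R}$ be an $n$-cycle with values $\lambda_0,\dots,\lambda_{n-1}\in\mathbb{R}\setminus\{\pm\tfrac1h\}$, such that $0<|e_{\lambda}(nh)|\neq1$ and $0<|e_{-\lambda}(nh)|\neq1$. Define for $t\in\mathbb{T}$ $$p(t)=-\lambda(t+2h),\quad q(t)=-2\Delta_h\lambda(t+h)+\Delta_h\lambda(t+2h)-\lambda(t+2h)\lambda(t+3h),$$ $$r(t)=-\Delta_h^2\lambda(t)-\lambda(t)\Delta_h\lambda(t+2h)+\lambda(t)\lambda(t+2h)\lambda(t+3h).$$ Then the third-order equation $$\Delta_h^3y(t)+p(t)\Delta_h^2y(t)+q(t)\Delta_h y(t)+r(t)y(t)=0,\qquad t\in\mathbb{T},$$ has Hyers–Ulam stability on $\mathbb{T}$ with Hyers–Ulam stability constant $K=\bigl(K_0(\lambda)\bigr)^2K_0(-\lambda)$.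
   Context: Fix $h>0$ and let $\mathbb{T}=\{0,h,2h,3h,\dots\}$. For $x:\mathbb{T}\to\mathbb{R}$, $\Delta_h x(t)=\frac{x(t+h)-x(t)}{h}$ and $\Delta_h^2x=\Delta_h(\Delta_h x)$, $\Delta_h^3x=\Delta_h(\Delta_h^2 x)$. An $n$-cycle is a function $\mu:\mathbb{T}\to\mathbb{R}$ with $\mu(t)=\mu_k$ whenever $t/h\equiv k\pmod n$, $k\in\{0,\dots,n-1\}$, which has period $n$ and no smaller period. For such $\mu$ define the discrete exponential $e_\mu(t)=\prod_{k=0}^{t/h-1}(1+h\mu(kh))$ (empty product $=1$), so $e_\mu(nh)=\prod_{k=0}^{n-1}(1+h\mu_k)$. For $k\in\{0,\dots,n-1\}$ define $$S_k(\mu)=\sum_{j=1}^{n}\prod_{i=0}^{j-1}\frac{1}{|1+h\mu_{(k+i)\bmod n}|},$$ (e.g. $S_0(\mu)=\frac{1}{|1+h\mu_0|}+\frac{1}{|1+h\mu_0||1+h\mu_1|}+\dots+\frac{1}{|1+h\mu_0|\cdots|1+h\mu_{n-1}|}$), and, when $0<|e_\mu(nh)|\neq1$, $$K_0(\mu)=\frac{h|e_\mu(nh)|}{\bigl|1-|e_\mu(nh)|\bigr|}\max\{S_0(\mu),\dots,S_{n-1}(\mu)\}.$$ Here $-\lambda$ denotes the $n$-cycle with values $-\lambda_0,\dots,-\lambda_{n-1}$. Hyers–Ulam stability: an equation $\mathcal{L}[y](t)=f(t)$, $t\in\mathbb{T}$ (with $\mathcal{L}$ a linear difference operator) has Hyers–Ulam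 stability on $\mathbb{T}$ with Hyers–Ulam stability constant $K>0$ if for every $\varepsilon>0$ and every $\xi:\mathbb{T}\to\mathbb{R}$ with $|\mathcal{L}[\xi](t)-f(t)|\le\varepsilon$ for all $t\in\mathbb{T}$, there is a solution $y:\mathbb{T}\to\mathbb{R}$ of the equation with $|\xi(t)-y(t)|\le K\varepsilon$ for all $t\in\mathbb{T}$. The minimum Hyers–Ulam stability constant is the smallest such $K$. *)

theory Defs
  imports Main "HOL.Real"
begin

text \<open>Functions on the time scale T = {0, h, 2h, ...} are represented as
  sequences x :: nat \<Rightarrow> real, where x k stands for x(kh).\<close>

definition dlt :: "real \<Rightarrow> (nat \<Rightarrow> real) \<Rightarrow> nat \<Rightarrow> real" where
  "dlt h x k = (x (Suc k) - x k) / h"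

definition is_cycle :: "nat \<Rightarrow> (nat \<Rightarrow> real) \<Rightarrow> bool" where
  "is_cycle n \<mu> \<longleftrightarrow> 0 < n \<and> (\<forall>k. \<mu> (k + n) = \<mu> k)
     \<and> (\<forall>m. 0 < m \<and> m < n \<longrightarrow> \<not> (\<forall>k. \<mu> (k + m) = \<mu> k))"

definition dexp_cycle :: "real \<Rightarrow> nat \<Rightarrow> (nat \<Rightarrow> real) \<Rightarrow> real" where
  "dexp_cycle h n \<mu> = (\<Prod>k<n. 1 + h * \<mu> k)"

definition S_k :: "real \<Rightarrow> nat \<Rightarrow> (nat \<Rightarrow> real) \<Rightarrow> nat \<Rightarrow> real" where
  "S_k h n \<mu> k = (\<Sum>j=1..n. \<Prod>i<j. 1 / \<bar>1 + h * \<mu> ((k + i) mod n)\<bar>)"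

definition K0 :: "real \<Rightarrow> nat \<Rightarrow> (nat \<Rightarrow> real) \<Rightarrow> real" where
  "K0 h n \<mu> = h * \<bar>dexp_cycle h n \<mu>\<bar> / \<bar>1 - \<bar>dexp_cycle h n \<mu>\<bar>\<bar>
      * Max ((S_k h n \<mu>) ` {..<n})"

definition hyers_ulam_stable ::
  "((nat \<Rightarrow> real) \<Rightarrow> nat \<Rightarrow> real) \<Rightarrow> (nat \<Rightarrow> real) \<Rightarrow> real \<Rightarrow> bool" where
  "hyers_ulam_stable L f K \<longleftrightarrow> K > 0 \<and>
     (\<forall>\<epsilon>>0. \<forall>\<xi>. (\<forall>t. \<bar>L \<xi> t - f t\<bar> \<le> \<epsilon>) \<longrightarrow>
        (\<exists>y. (\<forall>t. L y t = f t) \<and> (\<forall>t. \<bar>\<xi> t - y t\<bar> \<le> K * \<epsilon>)))"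

end

theory Submission
  imports Defs Complex_Main
begin

definition Dop :: "real \<Rightarrow> (nat \<Rightarrow> real) \<Rightarrow> (nat \<Rightarrow> real) \<Rightarrow> nat \<Rightarrow> real" where
  "Dop h \<mu> x t = dlt h x t - \<mu> t * x t"

lemma factor:
  fixes h :: real and lam p q r y :: "nat \<Rightarrow> real"
  assumes p_def: "\<forall>t. p t = - lam (t + 2)"
    and q_def: "\<forall>t. q t = - 2 * dlt h lam (t + 1) + dlt h lam (t + 2) - lam (t + 2) * lam (t + 3)"
    and r_def: "\<forall>t. r t = - dlt h (dlt h lam) t - lam t * dlt h lam (t + 2)
                          + lam t * lam (t + 2) * lam (t + 3)"
  shows "dlt h (dlt h (dlt h y)) t + p t * dlt h (dlt h y) t + q t * dlt h y t + r t * y t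
     = Dop h (\<lambda>k. lam (k+3)) (Dop h (\<lambda>k. - lam (k+2)) (Dop h lam y)) t"
proof -
  have P: "p t = - lam (t + 2)" using p_def by blast
  have Q: "q t = - 2 * dlt h lam (t + 1) + dlt h lam (t + 2) - lam (t + 2) * lam (t + 3)" using q_def by blast
  have R: "r t = - dlt h (dlt h lam) t - lam t * dlt h lam (t + 2)
                          + lam t * lam (t + 2) * lam (t + 3)" using r_def by blast
  show ?thesis unfolding P Q R Dop_def dlt_def
    by (simp add: numeral_eq_Suc divide_inverse algebra_simps)
qed

definition Q :: "(nat \<Rightarrow> real) \<Rightarrow> nat \<Rightarrow> nat \<Rightarrow> real" where
  "Q c t j = (\<Prod>i<j. c (t + i))"

lemma Q_0[simp]: "Q c t 0 = 1" by (simp add: Q_def)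
lemma Q_Suc: "Q c t (Suc j) = Q c t j * c (t + j)" by (simp add: Q_def)
lemma Q_add: "Q c t (j + l) = Q c t j * Q c (t + j) l"
  by (induction l) (simp_all add: Q_Suc add.assoc)

lemma Q_per: assumes "\<forall>k. c (k + n) = c k" shows "Q c (t + n) j = Q c t j"
  unfolding Q_def
proof (rule prod.cong)
  fix i show "c (t + n + i) = c (t + i)" using assms[rule_format, of "t+i"] by (simp add: ac_simps)
qed simp

lemma Q_nz: "\<forall>k. c k \<noteq> 0 \<Longrightarrow> Q c t j \<noteq> 0" by (simp add: Q_def)

lemma Q_n: assumes per: "\<forall>k. c (k + n) = c k" and nz: "\<forall>k. c k \<noteq> 0"
  shows "Q c t n = Q c 0 n"
proof (induction t)
  case (Suc t)
  have 1: "Q c t (1 + n) = Q c t 1 * Q c (t+1) n" by (rule Q_add)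
  have 2: "Q c t (n + 1) = Q c t n * Q c (t+n) 1" by (rule Q_add)
  have "c (t + n) = c t" using per by blast
  then have 3: "Q c (t+n) 1 = c t" by (simp add: Q_def)
  have 4: "Q c t 1 = c t" by (simp add: Q_def)
  have "c t * Q c (Suc t) n = Q c t n * c t" using 1 2 3 4 by (simp add: add.commute)
  then show ?case using Suc nz by (simp add: mult.commute)
qed simp

lemma geo_bound:
  fixes a :: "nat \<Rightarrow> real"
  assumes rec: "\<And>m. m < M \<Longrightarrow> a (m + n) = \<rho> * a m" and nn: "\<And>m. 0 \<le> a m"
    and r0: "0 \<le> \<rho>" and r1: "\<rho> < 1"
  shows "(\<Sum>m<M. a m) \<le> (\<Sum>m<n. a m) / (1 - \<rho>)"
proof -
  have split: "(\<Sum>m<n + M. a m) = (\<Sum>m<n. a m) + (\<Sum>m<M. a (m + n))"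
    by (induction M) (simp_all add: ac_simps)
  have r: "(\<Sum>m<M. a (m + n)) = \<rho> * (\<Sum>m<M. a m)"
    unfolding sum_distrib_left by (rule sum.cong) (auto simp: rec)
  have "(\<Sum>m<M. a m) \<le> (\<Sum>m<n + M. a m)" by (rule sum_mono2) (auto simp: nn)
  hence "(\<Sum>m<M. a m) \<le> (\<Sum>m<n. a m) + \<rho> * (\<Sum>m<M. a m)" using split r by simp
  hence "(\<Sum>m<M. a m) * (1 - \<rho>) \<le> (\<Sum>m<n. a m)" by (simp add: algebra_simps)
  thus ?thesis using r1 by (simp add: le_divide_eq)
qed


lemma fo_sol:
  fixes c g :: "nat \<Rightarrow> real" and h \<delta> B E :: real
  assumes n: "0 < n" and per: "\<forall>k. c (k + n) = c k" and nz: "\<forall>k. c k \<noteq> 0"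
    and E: "Q c 0 n = E" and E1: "\<bar>E\<bar> \<noteq> 1" and h: "h > 0"
    and g: "\<forall>t. \<bar>g t\<bar> \<le> \<delta>"
    and B: "\<forall>t. (\<Sum>j=1..n. \<Prod>i<j. 1 / \<bar>c (t + i)\<bar>) \<le> B"
  shows "\<exists>d. (\<forall>t. d (Suc t) = c t * d t + h * g t) \<and> (\<forall>t. \<bar>d t\<bar> \<le> h * \<bar>E\<bar> / \<bar>1 - \<bar>E\<bar>\<bar> * B * \<delta>)"
proof -
  have QtE: "Q c t n = E" for t using Q_n[OF per nz] E by simp
  have Enz: "E \<noteq> 0" using Q_nz[OF nz] E by auto
  have \<delta>: "0 \<le> \<delta>" using g by (meson abs_ge_zero order_trans)
  define T where "T t = (\<Sum>m<n. 1 / \<bar>Q c t (Suc m)\<bar>)" for t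
  have TB: "T t \<le> B" for t
  proof -
    have "(\<Sum>j=1..n. \<Prod>i<j. 1 / \<bar>c (t + i)\<bar>) = T t"
      unfolding T_def Q_def by (simp add: sum.atLeast1_atMost_eq abs_prod prod_dividef abs_mult)
    then show ?thesis using B by metis
  qed
  have T0: "0 \<le> T t" for t unfolding T_def by (intro sum_nonneg) simp
  have QnzA: "Q c t j \<noteq> 0" for t j using Q_nz[OF nz] by blast
  show ?thesis
  proof (cases "\<bar>E\<bar> < 1")
    case True
    define d where "d t = (\<Sum>s<t. h * g s * Q c (s+1) (t - s - 1))" for t
    have rec: "d (Suc t) = c t * d t + h * g t" for t
    proof -
      have "d (Suc t) = (\<Sum>s<t. h * g s * Q c (s+1) (Suc t - s - 1)) + h * g t" by (simp add: d_def)
      also have "(\<Sum>s<t. h * g s * Q c (s+1) (Suc t - s - 1)) = (\<Sum>s<t. c t * (h * g s * Q c (s+1) (t - s - 1)))"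
      proof (rule sum.cong)
        fix s assume "s \<in> {..<t}"
        then have "Suc t - s - 1 = Suc (t - s - 1)" and "s + 1 + (t - s - 1) = t" by auto
        then show "h * g s * Q c (s+1) (Suc t - s - 1) = c t * (h * g s * Q c (s+1) (t - s - 1))"
          by (simp add: Q_Suc)
      qed simp
      finally show ?thesis by (simp add: d_def sum_distrib_left)
    qed
    have bnd: "\<bar>d t\<bar> \<le> h * \<bar>E\<bar> / \<bar>1 - \<bar>E\<bar>\<bar> * B * \<delta>" for t
    proof -
      define a where "a m = \<bar>Q c (t + n - m) m\<bar>" for m
      have reidx: "(\<Sum>s<t. \<bar>Q c (s+1) (t - s - 1)\<bar>) = (\<Sum>m<t. a m)"
      proof -
        have "(\<Sum>s<t. \<bar>Q c (s+1) (t - s - 1)\<bar>) = (\<Sum>m<t. \<bar>Q c (t - Suc m + 1) (t - (t - Suc m) - 1)\<bar>)"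
          by (rule sum.nat_diff_reindex[symmetric])
        also have "\<dots> = (\<Sum>m<t. a m)"
        proof (rule sum.cong)
          fix m assume "m \<in> {..<t}"
          then have e1: "t - Suc m + 1 = t - m" "t - (t - Suc m) - 1 = m" "t + n - m = (t - m) + n" by auto
          show "\<bar>Q c (t - Suc m + 1) (t - (t - Suc m) - 1)\<bar> = a m" unfolding a_def e1 Q_per[OF per] ..
        qed simp
        finally show ?thesis .
      qed
      have suma: "(\<Sum>m<n. a m) = \<bar>E\<bar> * T t"
      proof -
        have "(\<Sum>m<n. a m) = (\<Sum>m<n. a (n - Suc m))" by (rule sum.nat_diff_reindex[symmetric])
        also have "\<dots> = (\<Sum>m<n. \<bar>E\<bar> * (1 / \<bar>Q c t (Suc m)\<bar>))"
        proof (rule sum.cong)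
          fix m assume "m \<in> {..<n}"
          then have e1: "t + n - (n - Suc m) = t + Suc m" and e2: "Suc m + (n - Suc m) = n" by auto
          have "E = Q c t (Suc m + (n - Suc m))" using QtE e2 by simp
          also have "\<dots> = Q c t (Suc m) * Q c (t + Suc m) (n - Suc m)" by (rule Q_add)
          finally have "\<bar>E\<bar> = \<bar>Q c t (Suc m)\<bar> * \<bar>Q c (t + Suc m) (n - Suc m)\<bar>" by (simp add: abs_mult)
          then show "a (n - Suc m) = \<bar>E\<bar> * (1 / \<bar>Q c t (Suc m)\<bar>)"
            unfolding a_def e1 using QnzA[of t "Suc m"] by simp
        qed simp
        finally show ?thesis unfolding T_def by (simp add: sum_distrib_left)
      qed
      have geo: "(\<Sum>m<t. a m) \<le> (\<Sum>m<n. a m) / (1 - \<bar>E\<bar>)"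
      proof (rule geo_bound)
        fix m assume "m < t"
        then have e1: "t + n - (m + n) = t - m" and e2: "t + n - m = (t - m) + n" and e3: "t - m + m = t" by auto
        have "Q c (t - m) (m + n) = Q c (t - m) m * Q c (t - m + m) n" by (rule Q_add)
        then have "Q c (t - m) (m + n) = Q c (t - m) m * E" using e3 QtE by simp
        then show "a (m + n) = \<bar>E\<bar> * a m" unfolding a_def e1 e2 Q_per[OF per] by (simp add: abs_mult)
      qed (use True in \<open>auto simp: a_def\<close>)
      have "\<bar>d t\<bar> \<le> (\<Sum>s<t. \<bar>h * g s * Q c (s+1) (t - s - 1)\<bar>)" unfolding d_def by (rule sum_abs)
      also have "\<dots> \<le> (\<Sum>s<t. h * \<delta> * \<bar>Q c (s+1) (t - s - 1)\<bar>)"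
      proof (rule sum_mono)
        fix s
        have "\<bar>g s\<bar> * \<bar>Q c (s+1) (t - s - 1)\<bar> \<le> \<delta> * \<bar>Q c (s+1) (t - s - 1)\<bar>"
          using g by (intro mult_right_mono) auto
        then show "\<bar>h * g s * Q c (s+1) (t - s - 1)\<bar> \<le> h * \<delta> * \<bar>Q c (s+1) (t - s - 1)\<bar>"
          using h by (simp add: abs_mult mult.assoc)
      qed
      also have "\<dots> = h * \<delta> * (\<Sum>m<t. a m)" by (simp add: sum_distrib_left reidx[symmetric])
      also have "\<dots> \<le> h * \<delta> * (\<bar>E\<bar> * T t / (1 - \<bar>E\<bar>))"
        using geo suma h \<delta> by (intro mult_left_mono) auto
      also have "\<dots> \<le> h * \<delta> * (\<bar>E\<bar> * B / (1 - \<bar>E\<bar>))"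
        using TB[of t] True h \<delta> by (intro mult_left_mono divide_right_mono) auto
      also have "\<dots> = h * \<bar>E\<bar> / \<bar>1 - \<bar>E\<bar>\<bar> * B * \<delta>" using True by simp
      finally show ?thesis .
    qed
    show ?thesis using rec bnd by blast
  next
    case False
    then have Eg: "\<bar>E\<bar> > 1" using E1 by simp
    define F where "F t m = g (t + m) / Q c t (Suc m)" for t m
    define b where "b t m = 1 / \<bar>Q c t (Suc m)\<bar>" for t m
    have bnn: "0 \<le> b t m" for t m by (simp add: b_def)
    have bpart: "(\<Sum>m<M. b t m) \<le> T t / (1 - 1 / \<bar>E\<bar>)" for t M
    proof -
      have "(\<Sum>m<M. b t m) \<le> (\<Sum>m<n. b t m) / (1 - 1 / \<bar>E\<bar>)"
      proof (rule geo_bound)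
        fix m
        have "Q c t (Suc m + n) = Q c t (Suc m) * Q c (t + Suc m) n" by (rule Q_add)
        then have "Q c t (Suc (m + n)) = Q c t (Suc m) * E" using QtE by simp
        then show "b t (m + n) = 1 / \<bar>E\<bar> * b t m" by (simp add: b_def abs_mult)
      qed (use Eg in \<open>auto simp: bnn\<close>)
      then show ?thesis by (simp add: T_def b_def)
    qed
    have bsum: "summable (b t)" for t by (rule summableI_nonneg_bounded[OF bnn bpart])
    have Fb: "\<bar>F t m\<bar> \<le> \<delta> * b t m" for t m
    proof -
      have "\<bar>F t m\<bar> = \<bar>g (t + m)\<bar> / \<bar>Q c t (Suc m)\<bar>" by (simp add: F_def abs_divide)
      also have "\<dots> \<le> \<delta> / \<bar>Q c t (Suc m)\<bar>" using g by (intro divide_right_mono) auto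
      finally show ?thesis by (simp add: b_def)
    qed
    have Fabs: "summable (\<lambda>m. \<bar>F t m\<bar>)" for t
      by (rule summable_rabs_comparison_test[of _ "\<lambda>m. \<delta> * b t m"]) (auto intro: Fb summable_mult bsum)
    have Fsum: "summable (F t)" for t by (rule summable_rabs_cancel[OF Fabs])
    define d where "d t = - h * suminf (F t)" for t
    have rec: "d (Suc t) = c t * d t + h * g t" for t
    proof -
      have F0: "F t 0 = g t / c t" by (simp add: F_def Q_def)
      have FS: "F t (Suc m) = F (Suc t) m / c t" for m
      proof -
        have "Q c t (1 + Suc m) = Q c t 1 * Q c (t + 1) (Suc m)" by (rule Q_add)
        then have "Q c t (Suc (Suc m)) = c t * Q c (Suc t) (Suc m)" by (simp add: Q_def)
        then show ?thesis by (simp add: F_def)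
      qed
      have "(\<Sum>m. F t (Suc m)) = suminf (F t) - F t 0" by (rule suminf_split_head[OF Fsum])
      moreover have "(\<Sum>m. F t (Suc m)) = suminf (F (Suc t)) / c t"
        unfolding FS by (rule suminf_divide[OF Fsum])
      ultimately have "suminf (F t) = g t / c t + suminf (F (Suc t)) / c t" using F0 by simp
      then have "c t * suminf (F t) = g t + suminf (F (Suc t))" using nz by (simp add: field_simps)
      then show ?thesis unfolding d_def by (simp add: algebra_simps)
    qed
    have bnd: "\<bar>d t\<bar> \<le> h * \<bar>E\<bar> / \<bar>1 - \<bar>E\<bar>\<bar> * B * \<delta>" for t
    proof -
      have "\<bar>d t\<bar> = h * \<bar>suminf (F t)\<bar>" using h by (simp add: d_def abs_mult)
      also have "\<dots> \<le> h * (\<Sum>m. \<bar>F t m\<bar>)" using h by (intro mult_left_mono summable_rabs Fabs) auto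
      also have "\<dots> \<le> h * (\<Sum>m. \<delta> * b t m)"
        using h by (intro mult_left_mono suminf_le Fabs summable_mult bsum Fb) auto
      also have "\<dots> = h * \<delta> * suminf (b t)" by (simp add: suminf_mult[OF bsum])
      also have "\<dots> \<le> h * \<delta> * (T t / (1 - 1 / \<bar>E\<bar>))"
        using h \<delta> by (intro mult_left_mono suminf_le_const bsum bpart) auto
      also have "\<dots> \<le> h * \<delta> * (B / (1 - 1 / \<bar>E\<bar>))"
        using TB[of t] Eg h \<delta> by (intro mult_left_mono divide_right_mono) auto
      also have "\<dots> = h * \<bar>E\<bar> / \<bar>1 - \<bar>E\<bar>\<bar> * B * \<delta>" using Eg by (simp add: field_simps)
      finally show ?thesis .
    qed
    show ?thesis using rec bnd by blast
  qed
qed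


lemma fo_hus:
  fixes \<mu> w f :: "nat \<Rightarrow> real"
  assumes n: "0 < n" and per: "\<forall>k. \<mu> (k + n) = \<mu> k" and nz: "\<forall>k. 1 + h * \<mu> k \<noteq> 0"
    and E: "Q (\<lambda>k. 1 + h * \<mu> k) 0 n = E" and E1: "\<bar>E\<bar> \<noteq> 1" and h: "h > 0"
    and B: "\<forall>t. (\<Sum>j=1..n. \<Prod>i<j. 1 / \<bar>1 + h * \<mu> (t + i)\<bar>) \<le> B"
    and w: "\<forall>t. \<bar>Dop h \<mu> w t - f t\<bar> \<le> \<delta>"
  shows "\<exists>w0. (\<forall>t. Dop h \<mu> w0 t = f t) \<and> (\<forall>t. \<bar>w t - w0 t\<bar> \<le> h * \<bar>E\<bar> / \<bar>1 - \<bar>E\<bar>\<bar> * B * \<delta>)"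
proof -
  define g where "g t = Dop h \<mu> w t - f t" for t
  have perc: "\<forall>k. 1 + h * \<mu> (k + n) = 1 + h * \<mu> k" using per by simp
  obtain d where drec: "\<forall>t. d (Suc t) = (1 + h * \<mu> t) * d t + h * g t"
    and db: "\<forall>t. \<bar>d t\<bar> \<le> h * \<bar>E\<bar> / \<bar>1 - \<bar>E\<bar>\<bar> * B * \<delta>"
    using fo_sol[of n "\<lambda>k. 1 + h * \<mu> k" E h g \<delta> B, OF n perc nz E E1 h] w B unfolding g_def by blast
  have "Dop h \<mu> (\<lambda>t. w t - d t) t = f t" for t
  proof -
    have "d (Suc t) = (1 + h * \<mu> t) * d t + h * g t" using drec by blast
    then have D: "d (Suc t) = (1 + h * \<mu> t) * d t + h * g t" .
    show ?thesis unfolding Dop_def dlt_def D unfolding g_def Dop_def dlt_def using h by (simp add: field_simps)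
  qed
  then show ?thesis using db by (intro exI[of _ "\<lambda>t. w t - d t"]) auto
qed

lemma per_mod: fixes \<nu> :: "nat \<Rightarrow> 'b" and n k :: nat assumes "\<forall>k. \<nu> (k + n) = \<nu> k" shows "\<nu> (k mod n) = \<nu> k"
proof -
  have "\<nu> (k mod n + n * q) = \<nu> (k mod n)" for q
  proof (induction q)
    case (Suc q)
    have "k mod n + n * Suc q = (k mod n + n * q) + n" by simp
    then show ?case using assms Suc by metis
  qed simp
  then show ?thesis by (metis mod_mult_div_eq)
qed

lemma S_le_Max:
  assumes per: "\<forall>k. \<nu> (k + n) = \<nu> k" and n: "0 < n"
  shows "(\<Sum>j=1..n. \<Prod>i<j. 1 / \<bar>1 + h * \<nu> (t + i + m)\<bar>) \<le> Max (S_k h n \<nu> ` {..<n})"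
proof -
  have "(\<Sum>j=1..n. \<Prod>i<j. 1 / \<bar>1 + h * \<nu> (t + i + m)\<bar>) = S_k h n \<nu> ((t + m) mod n)"
    unfolding S_k_def
  proof (intro sum.cong prod.cong refl)
    fix i
    have "\<nu> (((t + m) mod n + i) mod n) = \<nu> ((t + m + i) mod n)" by (simp add: mod_add_left_eq)
    also have "\<dots> = \<nu> (t + i + m)" using per_mod[OF per] by (simp add: ac_simps)
    finally show "1 / \<bar>1 + h * \<nu> (t + i + m)\<bar> = 1 / \<bar>1 + h * \<nu> (((t + m) mod n + i) mod n)\<bar>" by simp
  qed
  also have "\<dots> \<le> Max (S_k h n \<nu> ` {..<n})" using n by (intro Max_ge) auto
  finally show ?thesis .
qed

lemma Max_pos:
  assumes nz: "\<forall>k. 1 + h * \<nu> k \<noteq> 0" and n: "0 < n"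
  shows "0 < Max (S_k h n \<nu> ` {..<n})"
proof -
  have "0 < S_k h n \<nu> 0" unfolding S_k_def
    using n nz by (intro sum_pos prod_pos) auto
  also have "\<dots> \<le> Max (S_k h n \<nu> ` {..<n})" using n by (intro Max_ge) auto
  finally show ?thesis .
qed

lemma Q_shift: "Q (\<lambda>k. c (k + m)) 0 n = Q c m n" by (simp add: Q_def add.commute)


theorem theorem5p3:
  fixes h :: real and n :: nat and lam p q r :: "nat \<Rightarrow> real"
  assumes hpos: "h > 0"
    and cyc: "is_cycle n lam"
    and vals: "\<forall>k<n. lam k \<noteq> 1 / h \<and> lam k \<noteq> - (1 / h)"
    and e1: "0 < \<bar>dexp_cycle h n lam\<bar>" "\<bar>dexp_cycle h n lam\<bar> \<noteq> 1"
    and e2: "0 < \<bar>dexp_cycle h n (\<lambda>k. - lam k)\<bar>" "\<bar>dexp_cycle h n (\<lambda>k. - lam k)\<bar> \<noteq> 1"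
    and p_def: "\<forall>t. p t = - lam (t + 2)"
    and q_def: "\<forall>t. q t = - 2 * dlt h lam (t + 1) + dlt h lam (t + 2) - lam (t + 2) * lam (t + 3)"
    and r_def: "\<forall>t. r t = - dlt h (dlt h lam) t - lam t * dlt h lam (t + 2)
                          + lam t * lam (t + 2) * lam (t + 3)"
  shows "hyers_ulam_stable
           (\<lambda>y t. dlt h (dlt h (dlt h y)) t + p t * dlt h (dlt h y) t + q t * dlt h y t + r t * y t)
           (\<lambda>t. 0)
           ((K0 h n lam)\<^sup>2 * K0 h n (\<lambda>k. - lam k))"
proof -
  from cyc have n: "0 < n" and per: "\<forall>k. lam (k + n) = lam k" unfolding is_cycle_def by auto
  have perN: "\<forall>k. (\<lambda>k. - lam k) (k + n) = (\<lambda>k. - lam k) k" using per by simp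
  have nzL: "\<forall>k. 1 + h * lam k \<noteq> 0"
  proof
    fix k
    have "lam k = lam (k mod n)" using per_mod[OF per] by simp
    moreover have "lam (k mod n) \<noteq> - (1 / h)" using vals n by simp
    ultimately show "1 + h * lam k \<noteq> 0" using hpos by (auto simp: field_simps)
  qed
  have nzN: "\<forall>k. 1 + h * (\<lambda>k. - lam k) k \<noteq> 0"
  proof
    fix k
    have "lam k = lam (k mod n)" using per_mod[OF per] by simp
    moreover have "lam (k mod n) \<noteq> 1 / h" using vals n by simp
    ultimately show "1 + h * (\<lambda>k. - lam k) k \<noteq> 0" using hpos by (auto simp: field_simps)
  qed
  define cL where "cL k = 1 + h * lam k" for k
  define cN where "cN k = 1 + h * - lam k" for k
  have percL: "\<forall>k. cL (k + n) = cL k" using per by (simp add: cL_def)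
  have percN: "\<forall>k. cN (k + n) = cN k" using per by (simp add: cN_def)
  have nzcL: "\<forall>k. cL k \<noteq> 0" using nzL by (simp add: cL_def)
  have nzcN: "\<forall>k. cN k \<noteq> 0" using nzN by (simp add: cN_def)
  have EL: "Q cL m n = dexp_cycle h n lam" for m
    using Q_n[OF percL nzcL, of m] by (simp add: Q_def dexp_cycle_def cL_def)
  have EN: "Q cN m n = dexp_cycle h n (\<lambda>k. - lam k)" for m
    using Q_n[OF percN nzcN, of m] by (simp add: Q_def dexp_cycle_def cN_def)
  define KL where "KL = K0 h n lam"
  define KN where "KN = K0 h n (\<lambda>k. - lam k)"
  have KLe: "KL = h * \<bar>dexp_cycle h n lam\<bar> / \<bar>1 - \<bar>dexp_cycle h n lam\<bar>\<bar> * Max (S_k h n lam ` {..<n})"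
    by (simp add: KL_def K0_def)
  have KNe: "KN = h * \<bar>dexp_cycle h n (\<lambda>k. - lam k)\<bar> / \<bar>1 - \<bar>dexp_cycle h n (\<lambda>k. - lam k)\<bar>\<bar>
      * Max (S_k h n (\<lambda>k. - lam k) ` {..<n})"
    by (simp add: KN_def K0_def)
  have KLp: "KL > 0" unfolding KLe using hpos e1 Max_pos[OF nzL n] by auto
  have KNp: "KN > 0" unfolding KNe using hpos e2 Max_pos[OF nzN n] by auto
  have HA: "\<exists>w0. (\<forall>t. Dop h (\<lambda>k. lam (k+3)) w0 t = f t) \<and> (\<forall>t. \<bar>w t - w0 t\<bar> \<le> KL * \<delta>)"
    if "\<forall>t. \<bar>Dop h (\<lambda>k. lam (k+3)) w t - f t\<bar> \<le> \<delta>" for w f \<delta>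
  proof -
    have "Q (\<lambda>k. 1 + h * lam (k + 3)) 0 n = dexp_cycle h n lam"
      using Q_shift[of cL 3 n] EL by (simp add: cL_def)
    moreover have "\<forall>t. (\<Sum>j=1..n. \<Prod>i<j. 1 / \<bar>1 + h * lam (t + i + 3)\<bar>) \<le> Max (S_k h n lam ` {..<n})"
      using S_le_Max[OF per n] by blast
    moreover have "\<forall>k. (\<lambda>k. lam (k+3)) (k + n) = (\<lambda>k. lam (k+3)) k"
    proof
      fix k show "(\<lambda>k. lam (k+3)) (k + n) = (\<lambda>k. lam (k+3)) k" using per[rule_format, of "k+3"] by (simp add: ac_simps)
    qed
    moreover have "\<forall>k. 1 + h * (\<lambda>k. lam (k+3)) k \<noteq> 0" using nzL by simp
    ultimately show ?thesis using fo_hus[OF n _ _ _ e1(2) hpos _ that] unfolding KLe by blast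
  qed
  have HB: "\<exists>w0. (\<forall>t. Dop h (\<lambda>k. - lam (k+2)) w0 t = f t) \<and> (\<forall>t. \<bar>w t - w0 t\<bar> \<le> KN * \<delta>)"
    if "\<forall>t. \<bar>Dop h (\<lambda>k. - lam (k+2)) w t - f t\<bar> \<le> \<delta>" for w f \<delta>
  proof -
    have "Q (\<lambda>k. 1 + h * - lam (k + 2)) 0 n = dexp_cycle h n (\<lambda>k. - lam k)"
      using Q_shift[of cN 2 n] EN by (simp add: cN_def)
    moreover have "\<forall>t. (\<Sum>j=1..n. \<Prod>i<j. 1 / \<bar>1 + h * (\<lambda>k. - lam k) (t + i + 2)\<bar>) \<le> Max (S_k h n (\<lambda>k. - lam k) ` {..<n})"
      using S_le_Max[OF perN n] by blast
    moreover have "\<forall>k. 1 + h * - lam (k + 2) \<noteq> 0" using nzN by simp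
    moreover have "\<forall>k. (\<lambda>k. - lam (k+2)) (k + n) = (\<lambda>k. - lam (k+2)) k"
    proof
      fix k show "(\<lambda>k. - lam (k+2)) (k + n) = (\<lambda>k. - lam (k+2)) k" using per[rule_format, of "k+2"] by (simp add: ac_simps)
    qed
    ultimately show ?thesis using fo_hus[OF n _ _ _ e2(2) hpos _ that] unfolding KNe by simp
  qed
  have HC: "\<exists>w0. (\<forall>t. Dop h lam w0 t = f t) \<and> (\<forall>t. \<bar>w t - w0 t\<bar> \<le> KL * \<delta>)"
    if "\<forall>t. \<bar>Dop h lam w t - f t\<bar> \<le> \<delta>" for w f \<delta>
  proof -
    have "Q (\<lambda>k. 1 + h * lam k) 0 n = dexp_cycle h n lam"
      using EL[of 0] by (simp add: cL_def[abs_def])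
    moreover have "\<forall>t. (\<Sum>j=1..n. \<Prod>i<j. 1 / \<bar>1 + h * lam (t + i)\<bar>) \<le> Max (S_k h n lam ` {..<n})"
      using S_le_Max[OF per n, of h _ 0] by simp
    ultimately show ?thesis using fo_hus[OF n per nzL _ e1(2) hpos _ that] unfolding KLe by blast
  qed
  let ?L = "\<lambda>y t. dlt h (dlt h (dlt h y)) t + p t * dlt h (dlt h y) t + q t * dlt h y t + r t * y t"
  have LD: "?L y t = Dop h (\<lambda>k. lam (k+3)) (Dop h (\<lambda>k. - lam (k+2)) (Dop h lam y)) t" for y t
    by (rule factor[OF p_def q_def r_def])
  show ?thesis unfolding hyers_ulam_stable_def
  proof (intro conjI allI impI)
    show "0 < (K0 h n lam)\<^sup>2 * K0 h n (\<lambda>k. - lam k)"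
      using KLp KNp unfolding KL_def KN_def by simp
  next
    fix \<epsilon> :: real and \<xi> :: "nat \<Rightarrow> real"
    assume \<epsilon>: "0 < \<epsilon>" and xi: "\<forall>t. \<bar>?L \<xi> t - 0\<bar> \<le> \<epsilon>"
    define u where "u = Dop h (\<lambda>k. - lam (k+2)) (Dop h lam \<xi>)"
    have "\<forall>t. \<bar>Dop h (\<lambda>k. lam (k+3)) u t - 0\<bar> \<le> \<epsilon>" using xi by (simp add: LD u_def)
    then obtain u0 where u0: "\<forall>t. Dop h (\<lambda>k. lam (k+3)) u0 t = 0" and u0b: "\<forall>t. \<bar>u t - u0 t\<bar> \<le> KL * \<epsilon>"
      using HA[of u "\<lambda>t. 0" \<epsilon>] by auto
    have "\<forall>t. \<bar>Dop h (\<lambda>k. - lam (k+2)) (Dop h lam \<xi>) t - u0 t\<bar> \<le> KL * \<epsilon>" using u0b by (simp add: u_def)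
    then obtain w0 where w0: "\<forall>t. Dop h (\<lambda>k. - lam (k+2)) w0 t = u0 t" and w0b: "\<forall>t. \<bar>Dop h lam \<xi> t - w0 t\<bar> \<le> KN * (KL * \<epsilon>)"
      using HB[of "Dop h lam \<xi>" u0 "KL * \<epsilon>"] by blast
    then obtain y where y: "\<forall>t. Dop h lam y t = w0 t" and yb: "\<forall>t. \<bar>\<xi> t - y t\<bar> \<le> KL * (KN * (KL * \<epsilon>))"
      using HC[of \<xi> w0 "KN * (KL * \<epsilon>)"] w0b by blast
    have "Dop h lam y = w0" using y by auto
    moreover have "Dop h (\<lambda>k. - lam (k+2)) w0 = u0" using w0 by auto
    ultimately have "\<forall>t. ?L y t = 0" using u0 by (simp add: LD)
    moreover have "\<forall>t. \<bar>\<xi> t - y t\<bar> \<le> (K0 h n lam)\<^sup>2 * K0 h n (\<lambda>k. - lam k) * \<epsilon>"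
      using yb unfolding KL_def KN_def by (simp add: power2_eq_square ac_simps)
    ultimately show "\<exists>y. (\<forall>t. ?L y t = 0) \<and> (\<forall>t. \<bar>\<xi> t - y t\<bar> \<le> (K0 h n lam)\<^sup>2 * K0 h n (\<lambda>k. - lam k) * \<epsilon>)"
      by blast
  qed
qed

end
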